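(* Let $\xi>0$ be real, let $b\ge0$ and $N\ge2$ be integers, and for integers $0\le d\le N-1$ and $0\le l\le 2d$ put \begin{equation*} f_{d,l} = \exp\left(\frac{(2b+1)(d^2+d)\xi}{2N}\right) \cdot 2\sinh\left(\frac{(2d+1)\xi}{2N}\right) \cdot \prod_{k=1}^{l}4 \sinh\left(\frac{(2d+1+k)\xi}{2N}\right) \sinh\left(\frac{(2d+1-k)\xi}{2N}\right). \end{equation*} Then for all integers $l,d$ with $1\le d\le N-1$ and $0\le l\le2d-2$ we have $f_{d,l}> f_{d-1,l}$. *)

theory Defs
  imports Complex_Main
begin

definition f_dl :: "real \<Rightarrow> nat \<Rightarrow> nat \<Rightarrow> nat \<Rightarrow> nat \<Rightarrow> real" where
  "f_dl \<xi> b N d l =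
     exp ((2 * real b + 1) * (real d ^ 2 + real d) * \<xi> / (2 * real N))
     * (2 * sinh ((2 * real d + 1) * \<xi> / (2 * real N)))
     * (\<Prod>k=1..l. 4 * sinh ((2 * real d + 1 + real k) * \<xi> / (2 * real N))
                     * sinh ((2 * real d + 1 - real k) * \<xi> / (2 * real N)))"

end

theory Submission
  imports Defs
begin

lemma sc_less: "0 < (c::real) \<Longrightarrow> 0 < \<xi> \<Longrightarrow> x < y \<Longrightarrow> sinh (x * \<xi> / c) < sinh (y * \<xi> / c)"
  by (simp add: sinh_real_less_iff divide_strict_right_mono)

lemma sc_pos: "0 < (c::real) \<Longrightarrow> 0 < \<xi> \<Longrightarrow> 0 < x \<Longrightarrow> 0 < sinh (x * \<xi> / c)"
  by (simp add: sinh_real_pos_iff)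

theorem lemma3p1:
  fixes \<xi> :: real and b N d l :: nat
  assumes "\<xi> > 0" and "N \<ge> 2"
    and "1 \<le> d" and "d \<le> N - 1"
    and "l \<le> 2 * d - 2"
  shows "f_dl \<xi> b N d l > f_dl \<xi> b N (d - 1) l"
proof -
  define c where "c = 2 * real N"
  have c: "0 < c" using assms(2) by (simp add: c_def)
  have rd: "real (d - 1) = real d - 1" using assms(3) by simp
  define A where "A = exp ((2 * real b + 1) * (real (d-1) ^ 2 + real (d-1)) * \<xi> / c)"
  define A' where "A' = exp ((2 * real b + 1) * (real d ^ 2 + real d) * \<xi> / c)"
  define S where "S = 2 * sinh ((2 * real (d-1) + 1) * \<xi> / c)"
  define S' where "S' = 2 * sinh ((2 * real d + 1) * \<xi> / c)"
  define P where "P = (\<Prod>k=1..l. 4 * sinh ((2 * real (d-1) + 1 + real k) * \<xi> / c)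
                     * sinh ((2 * real (d-1) + 1 - real k) * \<xi> / c))"
  define P' where "P' = (\<Prod>k=1..l. 4 * sinh ((2 * real d + 1 + real k) * \<xi> / c)
                     * sinh ((2 * real d + 1 - real k) * \<xi> / c))"
  have "(2 * real b + 1) * (real (d-1) ^ 2 + real (d-1)) < (2 * real b + 1) * (real d ^ 2 + real d)"
  proof -
    have "real (d-1) ^ 2 + real (d-1) < real d ^ 2 + real d"
      using assms(3) by (simp add: rd power2_eq_square algebra_simps)
    moreover have "0 < 2 * real b + 1" by simp
    ultimately show ?thesis by (rule mult_strict_left_mono)
  qed
  then have AA: "A < A'" unfolding A_def A'_def
    using c assms(1) by (simp add: divide_strict_right_mono)
  have A0: "0 < A" by (simp add: A_def)
  have SS: "S < S'" unfolding S_def S'_def using sc_less[OF c assms(1)] rd by simp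
  have S0: "0 < S" unfolding S_def using sc_pos[OF c assms(1)] rd by simp
  have kb: "real k \<le> 2 * real d - 2" if "k \<in> {1..l}" for k
    using that assms(3,5) by auto
  have P0: "0 < P" unfolding P_def
  proof (rule prod_pos)
    fix k assume k: "k \<in> {1..l}"
    show "0 < 4 * sinh ((2 * real (d-1) + 1 + real k) * \<xi> / c) * sinh ((2 * real (d-1) + 1 - real k) * \<xi> / c)"
      using kb[OF k] sc_pos[OF c assms(1)] rd by simp
  qed
  have PP: "P \<le> P'" unfolding P_def P'_def
  proof (rule prod_mono)
    fix k assume k: "k \<in> {1..l}"
    have h1: "0 < sinh ((2 * real (d-1) + 1 + real k) * \<xi> / c)"
      using kb[OF k] sc_pos[OF c assms(1)] rd by simp
    have h2: "0 < sinh ((2 * real (d-1) + 1 - real k) * \<xi> / c)"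
      using kb[OF k] sc_pos[OF c assms(1)] rd by simp
    have h3: "sinh ((2 * real (d-1) + 1 + real k) * \<xi> / c) \<le> sinh ((2 * real d + 1 + real k) * \<xi> / c)"
      using sc_less[OF c assms(1)] rd by (simp add: less_imp_le)
    have h4: "sinh ((2 * real (d-1) + 1 - real k) * \<xi> / c) \<le> sinh ((2 * real d + 1 - real k) * \<xi> / c)"
      using sc_less[OF c assms(1)] rd by (simp add: less_imp_le)
    have "sinh ((2 * real (d-1) + 1 + real k) * \<xi> / c) * sinh ((2 * real (d-1) + 1 - real k) * \<xi> / c)
      \<le> sinh ((2 * real d + 1 + real k) * \<xi> / c) * sinh ((2 * real d + 1 - real k) * \<xi> / c)"
      using h1 h2 h3 h4 by (intro mult_mono) auto
    then show "0 \<le> 4 * sinh ((2 * real (d-1) + 1 + real k) * \<xi> / c) * sinh ((2 * real (d-1) + 1 - real k) * \<xi> / c) \<and>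
      4 * sinh ((2 * real (d-1) + 1 + real k) * \<xi> / c) * sinh ((2 * real (d-1) + 1 - real k) * \<xi> / c)
      \<le> 4 * sinh ((2 * real d + 1 + real k) * \<xi> / c) * sinh ((2 * real d + 1 - real k) * \<xi> / c)"
      using h1 h2 by simp
  qed
  have "A * S < A' * S'" using AA SS A0 S0 by (intro mult_strict_mono) auto
  then have "A * S * P < A' * S' * P'"
    using PP P0 A0 S0 mult_less_le_imp_less[of "A * S" "A' * S'" P P'] by auto
  then show ?thesis unfolding f_dl_def A_def A'_def S_def S'_def P_def P'_def c_def .
qed

end
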